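(* Let $H$, $G$ be real Hilbert spaces, $Z$ a nonempty closed convex subset of $H\times G$, $x_0\in H\times G$, $\{\lambda_n\}\subset(0,1]$, $\{H_n\}$ closed convex sets with $Z\subset H_n$, and let $\{x_n\},\{x_{n+1/2}\}$ be generated by $x_{n+1/2}=x_n+\lambda_n(P_{H_n}(x_n)-x_n)$, $x_{n+1}=P_{H(x_0,x_n)\cap C_n}(x_0)$, where each $C_n$ is closed convex with $Z\subset C_n\subset H(x_n,x_{n+1/2})$. For $n\ge1$ let $q_n:=P_{H(x_0,x_{n-1})\cap H(x_{n-1},x_{(n-1)+1/2})}(x_0)$ and let $\bar x=P_Z(x_0)$. Then for all $n\ge1$: (i) $\|x_0-x_n\|^2\ge\|x_0-q_n\|^2+\|x_n-q_n\|^2$; (ii) $\|\bar x-x_n\|^2\le\|x_0-\bar x\|^2-\|x_0-x_n\|^2\le\|x_0-\bar x\|^2-\|x_0-q_n\|^2-\|x_n-q_n\|^2$.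
   Context: For $x,y\in H\times G$, $H(x,y):=\{h:\ \langle h-y\mid x-y\rangle\le 0\}$. $P_D$ is the metric projection onto a nonempty closed convex set $D$. *)

theory Defs
  imports "HOL-Analysis.Analysis"
begin

text \<open>Metric projection onto a set D (for D nonempty closed convex in a Hilbert space
  the minimiser exists and is unique).\<close>
definition metric_proj :: "'a::real_inner set \<Rightarrow> 'a \<Rightarrow> 'a" where
  "metric_proj D x = (SOME p. p \<in> D \<and> (\<forall>y\<in>D. dist x p \<le> dist x y))"

definition Hhalf :: "'a::real_inner \<Rightarrow> 'a \<Rightarrow> 'a set" where
  "Hhalf x y = {h. inner (h - y) (x - y) \<le> 0}"

end

theory Submission
  imports Defs
begin

lemma proj_exists:
  fixes D :: "'a::{real_inner,complete_space} set"
  assumes ne: "D \<noteq> {}" and cl: "closed D" and cv: "convex D"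
  shows "\<exists>p\<in>D. \<forall>y\<in>D. dist x p \<le> dist x y"
proof -
  define d where "d = infdist x D"
  have d0: "0 \<le> d" unfolding d_def by (rule infdist_nonneg)
  have dle: "\<And>y. y \<in> D \<Longrightarrow> d \<le> dist x y" unfolding d_def by (rule infdist_le)
  have "\<forall>n. \<exists>y\<in>D. dist x y < d + 1 / real (Suc n)"
  proof
    fix n
    have "(INF a\<in>D. dist x a) < d + 1 / real (Suc n)"
      using infdist_notempty[OF ne, of x] unfolding d_def by simp
    then show "\<exists>y\<in>D. dist x y < d + 1 / real (Suc n)"
      using ne by (subst (asm) cINF_less_iff) auto
  qed
  then obtain y where yD: "\<And>n. y n \<in> D" and yd: "\<And>n. dist x (y n) < d + 1 / real (Suc n)"
    by metis
  have key: "norm (y m - y n)^2 \<le> 2 * (2*d+1) * (1/real (Suc m) + 1/real (Suc n))" for m n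
  proof -
    define a where "a = x - y m"
    define b where "b = x - y n"
    have par: "norm (a - b)^2 = 2 * norm a ^2 + 2 * norm b^2 - norm (a + b)^2"
      by (simp add: power2_norm_eq_inner inner_diff_left inner_diff_right inner_add_left inner_add_right inner_commute)
    have mid: "(1/2) *\<^sub>R y m + (1/2) *\<^sub>R y n \<in> D"
      using cv yD unfolding convex_def by (metis add_divide_distrib div_self one_add_one zero_le_divide_1_iff zero_le_numeral zero_neq_numeral)
    have "a + b = 2 *\<^sub>R (x - ((1/2) *\<^sub>R y m + (1/2) *\<^sub>R y n))"
      unfolding a_def b_def by (simp add: algebra_simps scaleR_2)
    hence "norm (a+b) = 2 * dist x ((1/2) *\<^sub>R y m + (1/2) *\<^sub>R y n)"
      by (simp add: dist_norm)
    hence ab: "norm (a+b) \<ge> 2 * d" using dle[OF mid] by simp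
    have ab2: "norm (a+b)^2 \<ge> (2*d)^2" by (rule power_mono[OF ab]) (use d0 in simp)
    define em where "em = 1/real (Suc m)"
    define en where "en = 1/real (Suc n)"
    have em: "0 < em" "em \<le> 1" unfolding em_def by auto
    have en: "0 < en" "en \<le> 1" unfolding en_def by auto
    have na: "norm a \<le> d + em" "norm b \<le> d + en"
      using yd[of m] yd[of n] unfolding a_def b_def em_def en_def dist_norm by auto
    have na2: "norm a ^2 \<le> (d+em)^2" "norm b^2 \<le> (d+en)^2"
      using na by (auto intro: power_mono)
    have "em*em \<le> em" using em by (intro mult_left_le_one_le) auto
    moreover have "en*en \<le> en" using en by (intro mult_left_le_one_le) auto
    moreover have "0 \<le> d*em" "0 \<le> d*en" using em en d0 by auto
    moreover have "(d+em)^2 = d^2 + 2*(d*em) + em*em" "(d+en)^2 = d^2 + 2*(d*en) + en*en" "(2*d)^2 = 4*d^2"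
      by (simp_all add: power2_eq_square algebra_simps)
    moreover have "2*(2*d+1)*(em+en) = 4*(d*em) + 4*(d*en) + 2*em + 2*en" by (simp add: algebra_simps)
    moreover have "norm (y m - y n)^2 = norm (a - b)^2" unfolding a_def b_def by (simp add: norm_minus_commute)
    ultimately have "norm (y m - y n)^2 \<le> 2*(2*d+1)*(em+en)" using par na2 ab2 by linarith
    thus ?thesis unfolding em_def en_def .
  qed
  have "Cauchy y"
  proof (rule CauchyI)
    fix e :: real assume e: "0 < e"
    obtain N :: nat where N0: "4 * (2*d+1) / (e^2) < real N"
      using reals_Archimedean2 by blast
    hence N: "4 * (2*d+1) / (e^2) < real (Suc N)" by simp
    show "\<exists>M. \<forall>m\<ge>M. \<forall>n\<ge>M. norm (y m - y n) < e"
    proof (intro exI allI impI)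
      fix m n assume m: "N \<le> m" and n: "N \<le> n"
      have "norm (y m - y n)^2 \<le> 2 * (2*d+1) * (2 / real (Suc N))"
      proof -
        have "1/real (Suc m) \<le> 1 / real (Suc N)" using m by (intro frac_le) auto
        moreover have "1/real (Suc n) \<le> 1 / real (Suc N)" using n by (intro frac_le) auto
        ultimately have "1/real (Suc m) + 1/real (Suc n) \<le> 2 / real (Suc N)" by simp
        hence "2 * (2*d+1) * (1/real (Suc m) + 1/real (Suc n)) \<le> 2 * (2*d+1) * (2 / real (Suc N))"
          using d0 by (intro mult_left_mono) auto
        thus ?thesis using key[of m n] by linarith
      qed
      also have "\<dots> < e^2"
      proof -
        have e2: "0 < e^2" using e by simp
        have "4 * (2*d+1) < real (Suc N) * e^2" using N e2 by (simp only: pos_divide_less_eq)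
        hence "2 * (2*d+1) * 2 < e^2 * real (Suc N)" by (simp add: algebra_simps)
        thus ?thesis by (simp add: pos_divide_less_eq divide_less_eq)
      qed
      finally have "norm (y m - y n)^2 < e^2" .
      then show "norm (y m - y n) < e" by (rule power_less_imp_less_base) (use e in simp)
    qed
  qed
  then obtain p where lim: "y \<longlonglongrightarrow> p" using Cauchy_convergent_iff convergent_def by blast
  have pD: "p \<in> D" using closed_sequentially[OF cl] yD lim by blast
  have "(\<lambda>n. dist x (y n)) \<longlonglongrightarrow> dist x p" using lim by (intro tendsto_intros)
  moreover have "(\<lambda>n. dist x (y n)) \<longlonglongrightarrow> d"
  proof (rule real_tendsto_sandwich[where f="\<lambda>n. d" and h="\<lambda>n. d + 1/real (Suc n)"])
    show "\<forall>\<^sub>F n in sequentially. d \<le> dist x (y n)" using dle yD by (simp add: always_eventually)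
    show "\<forall>\<^sub>F n in sequentially. dist x (y n) \<le> d + 1/real (Suc n)" using yd by (simp add: always_eventually less_imp_le)
    show "(\<lambda>n. d) \<longlonglongrightarrow> d" by simp
    have "(\<lambda>n. 1/real (Suc n)) \<longlonglongrightarrow> 0" using LIMSEQ_inverse_real_of_nat by (simp add: inverse_eq_divide)
    from tendsto_add[OF tendsto_const[of d] this] show "(\<lambda>n. d + 1/real (Suc n)) \<longlonglongrightarrow> d" by simp
  qed
  ultimately have "dist x p = d" using LIMSEQ_unique by blast
  thus ?thesis using pD dle by auto
qed

lemma proj_char:
  fixes D :: "'a::real_inner set"
  assumes cv: "convex D" and pD: "p \<in> D" and mn: "\<forall>y\<in>D. dist x p \<le> dist x y" and yD: "y \<in> D"
  shows "inner (y - p) (x - p) \<le> 0"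
proof (rule ccontr)
  assume "\<not> ?thesis"
  hence c: "0 < inner (y - p) (x - p)" by simp
  define v where "v = y - p"
  define c where "c = inner v (x - p)"
  have c0: "0 < c" using c by (simp add: v_def c_def)
  have v0: "v \<noteq> 0" using c0 by (auto simp: c_def)
  define n2 where "n2 = inner v v"
  have n2: "0 < n2" using v0 by (simp add: n2_def)
  define t where "t = min 1 (c / n2)"
  have t0: "0 < t" "t \<le> 1" using c0 n2 by (auto simp: t_def)
  have tn: "t * n2 \<le> c" using n2 by (simp add: t_def min_def le_divide_eq mult.commute split: if_splits)
  have "(1 - t) *\<^sub>R p + t *\<^sub>R y \<in> D" using cv pD yD t0 unfolding convex_def by auto
  moreover have "(1 - t) *\<^sub>R p + t *\<^sub>R y = p + t *\<^sub>R v" by (simp add: v_def algebra_simps)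
  ultimately have "dist x p \<le> dist x (p + t *\<^sub>R v)" using mn by metis
  hence "norm (x - p) \<le> norm ((x - p) - t *\<^sub>R v)" by (simp add: dist_norm algebra_simps)
  hence "norm (x - p)^2 \<le> norm ((x - p) - t *\<^sub>R v)^2" by (rule power_mono) simp
  moreover have "norm ((x - p) - t *\<^sub>R v)^2 = norm (x - p)^2 - 2 * t * c + t * t * n2"
    by (simp add: power2_norm_eq_inner inner_diff_left inner_diff_right inner_commute c_def n2_def algebra_simps)
  ultimately have "2 * t * c \<le> t * t * n2" by linarith
  hence "t * (2 * c) \<le> t * (t * n2)" by (simp add: algebra_simps)
  hence "2 * c \<le> t * n2" using t0(1) by (rule mult_left_le_imp_le)
  thus False using tn c0 by linarith
qed

lemma mp:
  fixes D :: "'a::{real_inner,complete_space} set"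
  assumes "D \<noteq> {}" "closed D" "convex D"
  shows "metric_proj D x \<in> D \<and> (\<forall>y\<in>D. inner (y - metric_proj D x) (x - metric_proj D x) \<le> 0)"
proof -
  have "\<exists>p. p \<in> D \<and> (\<forall>y\<in>D. dist x p \<le> dist x y)" using proj_exists[OF assms] by blast
  hence "metric_proj D x \<in> D \<and> (\<forall>y\<in>D. dist x (metric_proj D x) \<le> dist x y)"
    unfolding metric_proj_def by (rule someI_ex)
  thus ?thesis using proj_char[OF assms(3)] by blast
qed

lemma Hhalf_eq: "Hhalf a b = {h. inner (a - b) h \<le> inner (a - b) b}"
  by (auto simp: Hhalf_def inner_diff_left inner_commute)

lemma Hhalf_closed: "closed (Hhalf a b)"
  unfolding Hhalf_eq by (rule closed_halfspace_le)

lemma Hhalf_convex: "convex (Hhalf a b)"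
  unfolding Hhalf_eq by (rule convex_halfspace_le)

lemma norm_diff_sq: "norm (u - w)^2 = norm u^2 + norm w^2 - 2 * inner u (w::'a::real_inner)"
  by (simp add: power2_norm_eq_inner inner_diff_left inner_diff_right inner_commute)

theorem proposition15:
  fixes Z :: "('h::{real_inner,complete_space} \<times> 'g::{real_inner,complete_space}) set"
    and x :: "nat \<Rightarrow> 'h \<times> 'g"
    and xh :: "nat \<Rightarrow> 'h \<times> 'g"
    and lam :: "nat \<Rightarrow> real"
    and Hs C :: "nat \<Rightarrow> ('h \<times> 'g) set"
  assumes Z: "Z \<noteq> {}" "closed Z" "convex Z"
    and lam: "\<And>n. 0 < lam n \<and> lam n \<le> 1"
    and Hs: "\<And>n. closed (Hs n) \<and> convex (Hs n) \<and> Z \<subseteq> Hs n"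
    and xh_def: "\<And>n. xh n = x n + lam n *\<^sub>R (metric_proj (Hs n) (x n) - x n)"
    and C: "\<And>n. closed (C n) \<and> convex (C n) \<and> Z \<subseteq> C n \<and> C n \<subseteq> Hhalf (x n) (xh n)"
    and x_step: "\<And>n. x (Suc n) = metric_proj (Hhalf (x 0) (x n) \<inter> C n) (x 0)"
  shows "\<forall>n\<ge>1.
     (let q = metric_proj (Hhalf (x 0) (x (n - 1)) \<inter> Hhalf (x (n - 1)) (xh (n - 1))) (x 0);
          xbar = metric_proj Z (x 0)
      in norm (x 0 - x n)^2 \<ge> norm (x 0 - q)^2 + norm (x n - q)^2
       \<and> norm (xbar - x n)^2 \<le> norm (x 0 - xbar)^2 - norm (x 0 - x n)^2
       \<and> norm (x 0 - xbar)^2 - norm (x 0 - x n)^2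
           \<le> norm (x 0 - xbar)^2 - norm (x 0 - q)^2 - norm (x n - q)^2)"
proof -
  have Dprops: "Hhalf (x 0) (x n) \<inter> C n \<noteq> {} \<and> closed (Hhalf (x 0) (x n) \<inter> C n)
      \<and> convex (Hhalf (x 0) (x n) \<inter> C n)" if "Z \<subseteq> Hhalf (x 0) (x n)" for n
  proof -
    have "Z \<subseteq> Hhalf (x 0) (x n) \<inter> C n" using that C[of n] by auto
    moreover have "closed (Hhalf (x 0) (x n) \<inter> C n)" using C[of n] by (intro closed_Int Hhalf_closed) auto
    moreover have "convex (Hhalf (x 0) (x n) \<inter> C n)" using C[of n] by (intro convex_Int Hhalf_convex) auto
    ultimately show ?thesis using Z(1) by blast
  qed
  have ZH: "Z \<subseteq> Hhalf (x 0) (x n)" for n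
  proof (induction n)
    case 0
    then show ?case by (simp add: Hhalf_def)
  next
    case (Suc n)
    have sub: "Z \<subseteq> Hhalf (x 0) (x n) \<inter> C n" using Suc C[of n] by auto
    have "\<forall>y\<in>Hhalf (x 0) (x n) \<inter> C n. inner (y - x (Suc n)) (x 0 - x (Suc n)) \<le> 0"
      using mp[of "Hhalf (x 0) (x n) \<inter> C n" "x 0"] Dprops[OF Suc] x_step[of n] by simp
    then show ?case using sub by (auto simp: Hhalf_def)
  qed
  have xbar: "metric_proj Z (x 0) \<in> Z" using mp[OF Z] by blast
  show ?thesis
  proof (intro allI impI)
    fix n :: nat assume "1 \<le> n"
    then obtain k where k: "n = Suc k" by (cases n) auto
    define Q where "Q = Hhalf (x 0) (x k) \<inter> Hhalf (x k) (xh k)"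
    define q where "q = metric_proj Q (x 0)"
    define xb where "xb = metric_proj Z (x 0)"
    have DQ: "Hhalf (x 0) (x k) \<inter> C k \<subseteq> Q" using C[of k] by (auto simp: Q_def)
    have Dk: "Hhalf (x 0) (x k) \<inter> C k \<noteq> {}" "closed (Hhalf (x 0) (x k) \<inter> C k)" "convex (Hhalf (x 0) (x k) \<inter> C k)"
      using Dprops[OF ZH[of k]] by auto
    have xn: "x n \<in> Q" using mp[OF Dk, of "x 0"] x_step[of k] DQ k by auto
    have Qp: "Q \<noteq> {}" "closed Q" "convex Q" using Dk(1) DQ
      by (auto simp: Q_def intro!: Hhalf_closed Hhalf_convex convex_Int closed_Int)
    have i1: "inner (x n - q) (x 0 - q) \<le> 0" using mp[OF Qp, of "x 0"] xn by (simp add: q_def)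
    have i2: "inner (xb - x n) (x 0 - x n) \<le> 0" using ZH[of n] xbar by (auto simp: Hhalf_def xb_def)
    have e1: "norm (x 0 - x n)^2 = norm (x 0 - q)^2 + norm (x n - q)^2 - 2 * inner (x 0 - q) (x n - q)"
      using norm_diff_sq[of "x 0 - q" "x n - q"] by simp
    have e2: "norm (x 0 - xb)^2 = norm (x 0 - x n)^2 + norm (xb - x n)^2 - 2 * inner (x 0 - x n) (xb - x n)"
      using norm_diff_sq[of "x 0 - x n" "xb - x n"] by simp
    have A: "norm (x 0 - x n)^2 \<ge> norm (x 0 - q)^2 + norm (x n - q)^2"
      using e1 i1 by (simp add: inner_commute)
    have B: "norm (xb - x n)^2 \<le> norm (x 0 - xb)^2 - norm (x 0 - x n)^2"
      using e2 i2 by (simp add: inner_commute)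
    show "let q = metric_proj (Hhalf (x 0) (x (n - 1)) \<inter> Hhalf (x (n - 1)) (xh (n - 1))) (x 0);
          xbar = metric_proj Z (x 0)
      in norm (x 0 - x n)^2 \<ge> norm (x 0 - q)^2 + norm (x n - q)^2
       \<and> norm (xbar - x n)^2 \<le> norm (x 0 - xbar)^2 - norm (x 0 - x n)^2
       \<and> norm (x 0 - xbar)^2 - norm (x 0 - x n)^2
           \<le> norm (x 0 - xbar)^2 - norm (x 0 - q)^2 - norm (x n - q)^2"
      unfolding Let_def using A B k by (simp add: Q_def q_def xb_def)
  qed
qed

end
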